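(* Let $F$ be a non-archimedean local field over a dyadic place, with valuation ring $\mathfrak{o}$ and maximal ideal $\mathfrak{p}$. Let $\lambda\in\mathfrak{o}$, $\lambda\neq 0$, with $ord_\mathfrak{p}(\lambda)\in\{0,1\}$. Then the lattice $\mathfrak{o}^2$ is $\mathfrak{o}$-maximal for the quadratic form $q(x,y)=x^2+\lambda y^2$ on $F^2$ if and only if $\mathfrak{d}(-\lambda)=\mathfrak{p}$.
   Context: A lattice is a finitely generated $\mathfrak{o}$-submodule spanning $F^2$; its norm $\mathfrak{n}\Lambda$ is the fractional ideal generated by $q(\Lambda)$; $\Lambda$ is $\mathfrak{o}$-maximal if $\mathfrak{n}\Lambda\subset\mathfrak{o}$ and no lattice $\Lambda'\supsetneq\Lambda$ has $\mathfrak{n}\Lambda'\subset\mathfrak{o}$. The quadratic defect of $\alpha\in F$ is $\mathfrak{d}(\alpha)=\bigcap_{\xi\in F}(\alpha-\xi^2)\mathfrak{o}$ (so $\mathfrak{d}(\alpha)=0$ if $\alpha$ is a square). *)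

theory Defs
  imports Main "HOL-Library.Product_Plus"
begin

text \<open>A normalized discrete valuation v on a field, given on nonzero elements
  (the value at 0 is irrelevant and never used; 0 is treated as having valuation +infinity).\<close>

definition discrete_valuation :: "('a::field \<Rightarrow> int) \<Rightarrow> bool" where
  "discrete_valuation v \<longleftrightarrow>
     (\<forall>x y. x \<noteq> 0 \<longrightarrow> y \<noteq> 0 \<longrightarrow> v (x * y) = v x + v y) \<and>
     (\<forall>x y. x \<noteq> 0 \<longrightarrow> y \<noteq> 0 \<longrightarrow> x + y \<noteq> 0 \<longrightarrow> v (x + y) \<ge> min (v x) (v y)) \<and>
     (\<exists>\<pi>. \<pi> \<noteq> 0 \<and> v \<pi> = 1)"

definition val_ring :: "('a::field \<Rightarrow> int) \<Rightarrow> 'a set" where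
  "val_ring v = {x. x = 0 \<or> v x \<ge> 0}"

definition val_ideal :: "('a::field \<Rightarrow> int) \<Rightarrow> 'a set" where
  "val_ideal v = {x. x = 0 \<or> v x \<ge> 1}"

definition val_complete :: "('a::field \<Rightarrow> int) \<Rightarrow> bool" where
  "val_complete v \<longleftrightarrow>
     (\<forall>s :: nat \<Rightarrow> 'a.
        (\<forall>N::int. \<exists>M. \<forall>m\<ge>M. \<forall>n\<ge>M. s m = s n \<or> v (s m - s n) \<ge> N) \<longrightarrow>
        (\<exists>L. \<forall>N::int. \<exists>M. \<forall>n\<ge>M. s n = L \<or> v (s n - L) \<ge> N))"

definition finite_residue_field :: "('a::field \<Rightarrow> int) \<Rightarrow> bool" where
  "finite_residue_field v \<longleftrightarrow>
     (\<exists>S. finite S \<and> S \<subseteq> val_ring v \<and>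
          (\<forall>x\<in>val_ring v. \<exists>s\<in>S. x - s \<in> val_ideal v))"

text \<open>A dyadic non-archimedean local field: a field of characteristic 0 (type class),
  complete for a normalized discrete valuation with finite residue field of characteristic 2
  (i.e. 2 lies in the maximal ideal).\<close>
definition dyadic_local_field :: "('a::field_char_0 \<Rightarrow> int) \<Rightarrow> bool" where
  "dyadic_local_field v \<longleftrightarrow>
     discrete_valuation v \<and> val_complete v \<and> finite_residue_field v \<and>
     (2::'a) \<in> val_ideal v"

definition smul2 :: "'a::field \<Rightarrow> 'a \<times> 'a \<Rightarrow> 'a \<times> 'a" where
  "smul2 a w = (a * fst w, a * snd w)"

definition span2 :: "'a::field set \<Rightarrow> ('a \<times> 'a) set \<Rightarrow> ('a \<times> 'a) set" where
  "span2 R G = {w. \<exists>c. (\<forall>g\<in>G. c g \<in> R) \<and> w = (\<Sum>g\<in>G. smul2 (c g) g)}"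

definition is_lattice :: "('a::field \<Rightarrow> int) \<Rightarrow> ('a \<times> 'a) set \<Rightarrow> bool" where
  "is_lattice v L \<longleftrightarrow>
     (\<exists>G. finite G \<and> L = span2 (val_ring v) G) \<and>
     (\<forall>w. \<exists>G. finite G \<and> G \<subseteq> L \<and> w \<in> span2 UNIV G)"

definition o_submodule :: "('a::field \<Rightarrow> int) \<Rightarrow> 'a set \<Rightarrow> bool" where
  "o_submodule v M \<longleftrightarrow> 0 \<in> M \<and> (\<forall>x\<in>M. \<forall>y\<in>M. x + y \<in> M) \<and>
     (\<forall>a\<in>val_ring v. \<forall>x\<in>M. a * x \<in> M)"

definition o_gen :: "('a::field \<Rightarrow> int) \<Rightarrow> 'a set \<Rightarrow> 'a set" where
  "o_gen v S = \<Inter> {M. o_submodule v M \<and> S \<subseteq> M}"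

definition lattice_norm :: "('a::field \<Rightarrow> int) \<Rightarrow> ('a \<times> 'a \<Rightarrow> 'a) \<Rightarrow> ('a \<times> 'a) set \<Rightarrow> 'a set" where
  "lattice_norm v q L = o_gen v (q ` L)"

definition o_maximal :: "('a::field \<Rightarrow> int) \<Rightarrow> ('a \<times> 'a \<Rightarrow> 'a) \<Rightarrow> ('a \<times> 'a) set \<Rightarrow> bool" where
  "o_maximal v q L \<longleftrightarrow>
     is_lattice v L \<and> lattice_norm v q L \<subseteq> val_ring v \<and>
     \<not> (\<exists>L'. is_lattice v L' \<and> L \<subset> L' \<and> lattice_norm v q L' \<subseteq> val_ring v)"

definition quad_defect :: "('a::field \<Rightarrow> int) \<Rightarrow> 'a \<Rightarrow> 'a set" where
  "quad_defect v \<alpha> = (\<Inter>\<xi>. {(\<alpha> - \<xi>^2) * t | t. t \<in> val_ring v})"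

end

theory Submission imports Defs begin

definition vge :: "('a::field \<Rightarrow> int) \<Rightarrow> 'a \<Rightarrow> int \<Rightarrow> bool" where
  "vge v x k \<longleftrightarrow> x = 0 \<or> k \<le> v x"

lemma mem_O: "x \<in> val_ring v \<longleftrightarrow> vge v x 0" by (auto simp: val_ring_def vge_def)
lemma mem_P: "x \<in> val_ideal v \<longleftrightarrow> vge v x 1" by (auto simp: val_ideal_def vge_def)

locale dval = fixes v :: "'a::field \<Rightarrow> int" assumes dv: "discrete_valuation v"
begin

lemma vmult: "x \<noteq> 0 \<Longrightarrow> y \<noteq> 0 \<Longrightarrow> v (x*y) = v x + v y"
  using dv by (auto simp: discrete_valuation_def)
lemma vadd: "x \<noteq> 0 \<Longrightarrow> y \<noteq> 0 \<Longrightarrow> x + y \<noteq> 0 \<Longrightarrow> min (v x) (v y) \<le> v (x+y)"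
  using dv by (auto simp: discrete_valuation_def)
lemma pi_ex: "\<exists>p. p \<noteq> 0 \<and> v p = 1"
  using dv by (auto simp: discrete_valuation_def)
lemma v1: "v 1 = 0" using vmult[of 1 1] by simp
lemma vm1: "v (-1) = 0" using vmult[of "-1" "-1"] v1 by simp
lemma vneg: "x \<noteq> 0 \<Longrightarrow> v (-x) = v x" using vmult[of "-1" x] vm1 by simp
lemma vinv: "x \<noteq> 0 \<Longrightarrow> v (inverse x) = - v x" using vmult[of x "inverse x"] v1 by simp
lemma vsq: "x \<noteq> 0 \<Longrightarrow> v (x^2) = 2 * v x" using vmult[of x x] by (simp add: power2_eq_square)

lemma vge_0[simp]: "vge v 0 k" by (simp add: vge_def)
lemma vge_mono: "vge v x l \<Longrightarrow> k \<le> l \<Longrightarrow> vge v x k" by (auto simp: vge_def)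
lemma vge_add: "vge v x k \<Longrightarrow> vge v y k \<Longrightarrow> vge v (x+y) k"
  using vadd[of x y] unfolding vge_def by (cases "x = 0"; cases "y = 0"; cases "x+y=0") auto
lemma vge_neg[simp]: "vge v (-x) k \<longleftrightarrow> vge v x k"
  using vneg[of x] unfolding vge_def by (cases "x = 0") auto
lemma vge_diff: "vge v x k \<Longrightarrow> vge v y k \<Longrightarrow> vge v (x-y) k"
  using vge_add[of x k "-y"] by simp
lemma vge_mult: "vge v x k \<Longrightarrow> vge v y l \<Longrightarrow> vge v (x*y) (k+l)"
  using vmult[of x y] unfolding vge_def by (cases "x = 0"; cases "y = 0") auto
lemma vge_sq: "vge v (x^2) (2*k-1) \<Longrightarrow> vge v x k"
  using vsq[of x] unfolding vge_def by (cases "x = 0") auto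
lemma vge_v: "vge v x (v x)" by (simp add: vge_def)
lemma vge_inv: "x \<noteq> 0 \<Longrightarrow> vge v (inverse x) (- v x)" using vinv[of x] by (simp add: vge_def)
lemma vge_one: "vge v 1 0" using v1 by (simp add: vge_def)
lemma vge_pow2: "vge v x k \<Longrightarrow> vge v (x^2) (2*k)"
  using vge_mult[of x k x k] by (simp add: power2_eq_square)

lemma perfect:
  assumes fin: "finite_residue_field v" and two: "vge v 2 1" and x: "vge v x 0"
  shows "\<exists>y. vge v y 0 \<and> vge v (x - y^2) 1"
proof -
  from fin have "\<exists>S. finite S \<and> S \<subseteq> val_ring v \<and> (\<forall>x\<in>val_ring v. \<exists>s\<in>S. x - s \<in> val_ideal v)"
    unfolding finite_residue_field_def .
  then obtain S where S0: "finite S \<and> S \<subseteq> val_ring v \<and> (\<forall>x\<in>val_ring v. \<exists>s\<in>S. x - s \<in> val_ideal v)"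
    by (rule exE)
  have S: "finite S" "S \<subseteq> val_ring v" "\<forall>x\<in>val_ring v. \<exists>s\<in>S. x - s \<in> val_ideal v"
    using S0 by simp_all
  define covers where "covers T \<longleftrightarrow> T \<subseteq> S \<and> (\<forall>x. vge v x 0 \<longrightarrow> (\<exists>s\<in>T. vge v (x - s) 1))" for T
  have cS: "covers S" unfolding covers_def
  proof (intro conjI allI impI)
    fix x assume "vge v x 0"
    then have "x \<in> val_ring v" by (simp add: mem_O)
    then obtain s where "s \<in> S" "x - s \<in> val_ideal v" using S(3) by blast
    then show "\<exists>s\<in>S. vge v (x - s) 1" by (auto simp: mem_P)
  qed simp
  define n where "n = (LEAST n. \<exists>T. covers T \<and> card T = n)"
  have "\<exists>T. covers T \<and> card T = n" unfolding n_def by (rule LeastI[of _ "card S"]) (use cS in blast)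
  then obtain T where T: "covers T" "card T = n" by blast
  have fT: "finite T" using T S(1) unfolding covers_def by (meson finite_subset)
  have TO: "vge v s 0" if "s \<in> T" for s
  proof -
    have "s \<in> S" using T that unfolding covers_def by blast
    then have "s \<in> val_ring v" using S(2) by blast
    then show ?thesis by (simp add: mem_O)
  qed
  have dist: "s1 = s2" if "s1 \<in> T" "s2 \<in> T" "vge v (s1 - s2) 1" for s1 s2
  proof (rule ccontr)
    assume ne: "s1 \<noteq> s2"
    have "covers (T - {s2})"
      unfolding covers_def
    proof (intro conjI allI impI)
      show "T - {s2} \<subseteq> S" using T unfolding covers_def by blast
      fix x assume "vge v x 0"
      then obtain s where s: "s \<in> T" "vge v (x - s) 1" using T unfolding covers_def by blast
      show "\<exists>s\<in>T - {s2}. vge v (x - s) 1"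
      proof (cases "s = s2")
        case True
        have "vge v ((x - s2) - (s1 - s2)) 1" using vge_diff s that True by blast
        then show ?thesis using that ne by (intro bexI[of _ s1]) auto
      qed (use s in auto)
    qed
    moreover have "card (T - {s2}) < n" using T(2) card_Diff1_less[OF fT that(2)] by simp
    ultimately show False using not_less_Least[of "card (T - {s2})"] unfolding n_def by blast
  qed
  define g where "g s = (SOME s'. s' \<in> T \<and> vge v (s^2 - s') 1)" for s
  have g: "g s \<in> T \<and> vge v (s^2 - g s) 1" if "s \<in> T" for s
  proof -
    have "vge v (s^2) 0" using vge_pow2[OF TO[OF that]] by simp
    then have "\<exists>s'. s' \<in> T \<and> vge v (s^2 - s') 1" using T unfolding covers_def by blast
    then show ?thesis unfolding g_def by (rule someI_ex)
  qed
  have inj: "inj_on g T"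
  proof (rule inj_onI)
    fix s1 s2 assume a: "s1 \<in> T" "s2 \<in> T" "g s1 = g s2"
    have "vge v ((s1^2 - g s1) - (s2^2 - g s2)) 1" using g a vge_diff by blast
    then have h1: "vge v (s1^2 - s2^2) 1" using a(3) by simp
    have h2: "vge v (2 * s2 * (s1 - s2)) 1"
      using vge_mult[OF vge_mult[OF two TO[OF a(2)]] vge_diff[OF TO[OF a(1)] TO[OF a(2)]]] by simp
    have "(s1 - s2)^2 = (s1^2 - s2^2) - 2 * s2 * (s1 - s2)" by (simp add: power2_eq_square algebra_simps)
    then have "vge v ((s1 - s2)^2) (2*1-1)" using vge_diff[OF h1 h2] by simp
    then have "vge v (s1 - s2) 1" by (rule vge_sq)
    then show "s1 = s2" using dist a by blast
  qed
  have "g ` T = T" using endo_inj_surj[OF fT _ inj] g by blast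
  obtain s where s: "s \<in> T" "vge v (x - s) 1" using T x unfolding covers_def by blast
  then obtain s0 where s0: "s0 \<in> T" "s = g s0" using \<open>g ` T = T\<close> by force
  have "vge v ((x - s) - (s0^2 - g s0)) 1" using vge_diff s g[OF s0(1)] by blast
  then have "vge v (x - s0^2) 1" using s0(2) by (simp add: algebra_simps)
  then show ?thesis using TO[OF s0(1)] by blast
qed


lemma vge_1_not: "\<not> vge v 1 1" using v1 by (simp add: vge_def)

lemma O_sub: "o_submodule v (val_ring v)"
  unfolding o_submodule_def using vge_add[of _ 0] vge_mult[of _ 0 _ 0] by (auto simp: mem_O)

lemma norm_sub_iff: "lattice_norm v q L \<subseteq> val_ring v \<longleftrightarrow> q ` L \<subseteq> val_ring v"
proof
  assume "lattice_norm v q L \<subseteq> val_ring v"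
  moreover have "q ` L \<subseteq> lattice_norm v q L" unfolding lattice_norm_def o_gen_def by blast
  ultimately show "q ` L \<subseteq> val_ring v" by blast
next
  assume "q ` L \<subseteq> val_ring v"
  then show "lattice_norm v q L \<subseteq> val_ring v"
    unfolding lattice_norm_def o_gen_def using O_sub by blast
qed

lemma qd_mem: "x \<in> quad_defect v a \<longleftrightarrow> (\<forall>\<xi>. \<exists>t. vge v t 0 \<and> x = (a - \<xi>^2) * t)"
  unfolding quad_defect_def mem_O by blast

lemma qd_in: assumes "\<not> vge v D 2" "vge v x 1" shows "\<exists>t. vge v t 0 \<and> x = D * t"
proof -
  have D: "D \<noteq> 0" "v D \<le> 1" using assms(1) by (auto simp: vge_def)
  have "vge v (x * inverse D) (1 + - v D)" using vge_mult[OF assms(2) vge_inv[OF D(1)]] .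
  then have "vge v (x * inverse D) 0" using D(2) vge_mono by fastforce
  moreover have "x = D * (x * inverse D)" using D(1) by simp
  ultimately show ?thesis by blast
qed

lemma qd_eq:
  assumes "\<forall>\<xi>. \<not> vge v (a - \<xi>^2) 2" "vge v (a - \<xi>0^2) 1"
  shows "quad_defect v a = val_ideal v"
proof
  show "quad_defect v a \<subseteq> val_ideal v"
  proof
    fix x assume "x \<in> quad_defect v a"
    then obtain t where "vge v t 0" "x = (a - \<xi>0^2) * t" unfolding qd_mem by blast
    then show "x \<in> val_ideal v" unfolding mem_P using vge_mult[OF assms(2)] by fastforce
  qed
  show "val_ideal v \<subseteq> quad_defect v a"
  proof
    fix x assume "x \<in> val_ideal v"
    then have x1: "vge v x 1" by (simp add: mem_P)
    show "x \<in> quad_defect v a" unfolding qd_mem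
    proof
      fix \<xi>
      show "\<exists>t. vge v t 0 \<and> x = (a - \<xi>^2) * t" using qd_in[OF _ x1] assms(1) by blast
    qed
  qed
qed

lemma qd_ne:
  assumes "vge v (a - \<xi>^2) 2" shows "quad_defect v a \<noteq> val_ideal v"
proof
  assume eq: "quad_defect v a = val_ideal v"
  obtain p where p: "p \<noteq> 0" "v p = 1" using pi_ex by blast
  have "p \<in> val_ideal v" unfolding mem_P using p by (simp add: vge_def)
  then have "p \<in> quad_defect v a" using eq by simp
  then obtain t where "vge v t 0" "p = (a - \<xi>^2) * t" unfolding qd_mem by blast
  then have "vge v p 2" using vge_mult[OF assms] by fastforce
  then show False using p by (simp add: vge_def)
qed

lemma extract_ab:
  assumes u: "u \<noteq> 0" "v u < 0" and w: "vge v w1 (v u)" "vge v w2 (v u)" "w1 = u \<or> w2 = u"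
    and inL: "(w1, w2) \<in> L'" and cl: "\<forall>t. vge v t 0 \<longrightarrow> (\<forall>z\<in>L'. smul2 t z \<in> L')"
    and qL: "\<forall>z\<in>L'. vge v (fst z ^2 + lam * snd z ^2) 0"
  shows "\<exists>a b. vge v a 0 \<and> vge v b 0 \<and> \<not> (vge v a 1 \<and> vge v b 1) \<and> vge v (a^2 + lam * b^2) 2"
proof -
  obtain p where p: "p \<noteq> 0" "v p = 1" using pi_ex by blast
  define a where "a = w1 * inverse u"
  define b where "b = w2 * inverse u"
  have a0: "vge v a 0" using vge_mult[OF w(1) vge_inv[OF u(1)]] unfolding a_def by simp
  have b0: "vge v b 0" using vge_mult[OF w(2) vge_inv[OF u(1)]] unfolding b_def by simp
  have ab1: "a = 1 \<or> b = 1" using w(3) u(1) unfolding a_def b_def by auto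
  define t where "t = inverse (p * u)"
  have "p * u \<noteq> 0" using p u by simp
  then have "vge v t (- v (p * u))" unfolding t_def by (rule vge_inv)
  then have t0: "vge v t 0" using vmult[OF p(1) u(1)] p u vge_mono by fastforce
  define z where "z = smul2 t (w1, w2)"
  have zL: "z \<in> L'" using cl t0 inL unfolding z_def by blast
  have z: "fst z = a * inverse p" "snd z = b * inverse p"
    unfolding z_def a_def b_def t_def smul2_def using p u by (simp_all add: field_simps)
  define r where "r = fst z ^2 + lam * snd z ^2"
  have r0: "vge v r 0" using qL zL unfolding r_def by blast
  have "a^2 + lam * b^2 = r * p^2" unfolding r_def z using p by (simp add: field_simps)
  moreover have "vge v (p^2) 2" using vge_pow2[OF vge_v[of p]] p by simp
  ultimately have "vge v (a^2 + lam * b^2) 2" using vge_mult[OF r0] by fastforce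
  then show ?thesis using a0 b0 ab1 vge_1_not by blast
qed

end

lemma smul2_simp[simp]: "smul2 a (x, y) = (a * x, a * y)" by (simp add: smul2_def)

lemma span2_two: fixes R :: "'a::field set" shows "span2 R {(1,0),(0,1)} = R \<times> R"
proof
  show "span2 R {(1,0),(0,1)} \<subseteq> R \<times> R" unfolding span2_def by auto
  show "R \<times> R \<subseteq> span2 R {(1,0),(0,1)}"
  proof
    fix z assume "z \<in> R \<times> R"
    then show "z \<in> span2 R {(1,0),(0,1)}" unfolding span2_def
      by (intro CollectI exI[of _ "\<lambda>g::'a\<times>'a. if g = (1,0) then fst z else snd z"]) (auto simp: prod_eq_iff)
  qed
qed

lemma span2_three:
  fixes R :: "'a::field set" and w :: "'a \<times> 'a"
  assumes "w \<notin> {(1,0),(0,1)}"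
  shows "z \<in> span2 R {(1,0),(0,1),w} \<longleftrightarrow>
    (\<exists>c1\<in>R. \<exists>c2\<in>R. \<exists>c3\<in>R. z = (c1 + c3 * fst w, c2 + c3 * snd w))"
proof
  assume "z \<in> span2 R {(1,0),(0,1),w}"
  then obtain c where c: "\<forall>g\<in>{(1,0),(0,1),w}. c g \<in> R" "z = (\<Sum>g\<in>{(1,0),(0,1),w}. smul2 (c g) g)"
    unfolding span2_def by blast
  have "z = (c (1,0) + c w * fst w, c (0,1) + c w * snd w)"
    using c(2) assms by (cases w) (auto simp: algebra_simps)
  then show "\<exists>c1\<in>R. \<exists>c2\<in>R. \<exists>c3\<in>R. z = (c1 + c3 * fst w, c2 + c3 * snd w)" using c(1) by blast
next
  assume "\<exists>c1\<in>R. \<exists>c2\<in>R. \<exists>c3\<in>R. z = (c1 + c3 * fst w, c2 + c3 * snd w)"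
  then obtain c1 c2 c3 where c: "c1 \<in> R" "c2 \<in> R" "c3 \<in> R" "z = (c1 + c3 * fst w, c2 + c3 * snd w)" by blast
  define c where "c (g::'a\<times>'a) = (if g = (1,0) then c1 else if g = (0,1) then c2 else c3)" for g
  have "z = (\<Sum>g\<in>{(1,0),(0,1),w}. smul2 (c g) g)"
    using c(4) assms unfolding c_def by (cases w) (auto simp: algebra_simps)
  moreover have "\<forall>g\<in>{(1,0),(0,1),w}. c g \<in> R" using c unfolding c_def by auto
  ultimately show "z \<in> span2 R {(1,0),(0,1),w}" unfolding span2_def by blast
qed

lemma span2_smul:
  assumes "\<forall>a\<in>R. \<forall>b\<in>R. a * b \<in> R" "t \<in> R" "z \<in> span2 R G"
  shows "smul2 t z \<in> span2 R G"
proof -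
  obtain c where c: "\<forall>g\<in>G. c g \<in> R" "z = (\<Sum>g\<in>G. smul2 (c g) g)" using assms(3) unfolding span2_def by blast
  have "smul2 t z = (\<Sum>g\<in>G. smul2 (t * c g) g)"
    unfolding c(2) smul2_def by (simp add: fst_sum snd_sum sum_distrib_left mult.assoc sum_prod)
  moreover have "\<forall>g\<in>G. t * c g \<in> R" using c assms by blast
  ultimately show ?thesis unfolding span2_def
    by (intro CollectI exI[of _ "\<lambda>g. t * c g"] conjI) auto
qed


lemma id_lemma: fixes c1 :: "'a::comm_ring_1"
  shows "(c1 + c3*(a*i))^2 + lam*(c2+c3*(b*i))^2 = (c1^2 + lam*c2^2) + c3^2 * ((a^2+lam*b^2) * i^2)
       + (2 * i) * (c1*c3*a) + (2 * i) * (lam*c2*c3*b)"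
  by (simp add: power2_eq_square algebra_simps)

context dval begin

lemma vge_mult0: "vge v x 0 \<Longrightarrow> vge v y 0 \<Longrightarrow> vge v (x*y) 0"
  using vge_mult[of x 0 y 0] by simp
lemma vge_pow20: "vge v x 0 \<Longrightarrow> vge v (x^2) 0"
  using vge_pow2[of x 0] by simp

lemma case1_noE:
  assumes lam: "lam \<noteq> 0" "v lam = 1" and ab: "vge v a 0" "vge v b 0" "vge v (a^2 + lam*b^2) 2"
  shows "vge v a 1 \<and> vge v b 1"
proof -
  have l1: "vge v lam 1" using vge_v[of lam] lam by simp
  have "vge v (lam*b^2) (1+2*0)" using vge_mult[OF l1 vge_pow2[OF ab(2)]] .
  then have lb1: "vge v (lam*b^2) 1" by simp
  have ab3: "vge v (a^2+lam*b^2) 1" using vge_mono[OF ab(3)] by simp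
  have "vge v ((a^2+lam*b^2) - lam*b^2) 1" by (rule vge_diff[OF ab3 lb1])
  then have "vge v (a^2) (2*1-1)" by simp
  then have a1: "vge v a 1" by (rule vge_sq)
  have a2: "vge v (a^2) 2" using vge_pow2[OF a1] by simp
  have "vge v ((a^2+lam*b^2) - a^2) 2" by (rule vge_diff[OF ab(3) a2])
  then have lb: "vge v (lam*b^2) 2" by simp
  have "vge v b 1"
  proof (cases "b = 0")
    case False
    then have "v (lam*b^2) = 1 + 2 * v b" using vmult[of lam "b^2"] vsq[of b] lam by simp
    moreover have "lam * b^2 \<noteq> 0" using False lam by simp
    ultimately show ?thesis using lb by (simp add: vge_def)
  qed simp
  then show ?thesis using a1 by blast
qed

lemma case1_allD:
  assumes lam: "lam \<noteq> 0" "v lam = 1"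
  shows "\<not> vge v (-lam - \<xi>^2) 2"
proof
  assume D: "vge v (-lam - \<xi>^2) 2"
  have l1: "vge v (-lam) 1" using vge_v[of lam] lam by simp
  have D1: "vge v (-lam - \<xi>^2) 1" using vge_mono[OF D] by simp
  have "vge v (-lam - (-lam - \<xi>^2)) 1" by (rule vge_diff[OF l1 D1])
  then have "vge v (\<xi>^2) (2*1-1)" by simp
  then have "vge v \<xi> 1" by (rule vge_sq)
  then have "vge v ((-lam - \<xi>^2) + \<xi>^2) 2" using vge_add[OF D] vge_pow2 by fastforce
  then have "vge v lam 2" by simp
  then show False using lam by (simp add: vge_def)
qed

lemma case0_E:
  assumes lam: "lam \<noteq> 0" "v lam = 0" and ab: "vge v a 0" "vge v b 0" "\<not> (vge v a 1 \<and> vge v b 1)"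
    "vge v (a^2 + lam*b^2) 2"
  shows "\<exists>\<xi>. vge v (-lam - \<xi>^2) 2"
proof -
  have l0: "vge v lam 0" using vge_v[of lam] lam by simp
  have b1: "\<not> vge v b 1"
  proof
    assume b1: "vge v b 1"
    have "vge v (lam*b^2) (0 + 2*1)" using vge_mult[OF l0 vge_pow2[OF b1]] .
    then have "vge v (lam*b^2) 2" by simp
    then have "vge v ((a^2+lam*b^2) - lam*b^2) 2" by (rule vge_diff[OF ab(4)])
    then have "vge v (a^2) (2*1-1)" using vge_mono by fastforce
    then have "vge v a 1" by (rule vge_sq)
    then show False using ab(3) b1 by blast
  qed
  then have b: "b \<noteq> 0" "v b = 0" using ab(2) by (auto simp: vge_def)
  have ib: "vge v (inverse b) 0" using vge_inv[OF b(1)] b(2) by simp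
  have eq: "-lam - (a*inverse b)^2 = -(a^2+lam*b^2) * (inverse b)^2"
    using b(1) by (simp add: field_simps power2_eq_square)
  have h: "vge v (-(a^2+lam*b^2)) 2" using ab(4) by (simp only: vge_neg)
  have "vge v (-(a^2+lam*b^2) * (inverse b)^2) (2 + 2*0)"
    by (rule vge_mult[OF h vge_pow2[OF ib]])
  moreover have e2: "(2::int) + 2*0 = 2" by simp
  ultimately have "vge v (-lam - (a*inverse b)^2) 2" unfolding eq by (simp only: e2)
  then show ?thesis by blast
qed

lemma case0_E_rev:
  assumes l0: "vge v lam 0" and D: "vge v (-lam - \<xi>^2) 2"
  shows "\<exists>a b. vge v a 0 \<and> vge v b 0 \<and> \<not> (vge v a 1 \<and> vge v b 1) \<and> vge v (a^2 + lam*b^2) 2"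
proof -
  have D0: "vge v (-lam - \<xi>^2) 0" using vge_mono[OF D] by simp
  have "vge v (-lam - (-lam - \<xi>^2)) 0" by (rule vge_diff) (use l0 D0 in simp_all)
  then have "vge v (\<xi>^2) (2*0-1)" using vge_mono by fastforce
  then have x0: "vge v \<xi> 0" by (rule vge_sq)
  have e: "\<xi>^2 + lam * 1^2 = - (-lam - \<xi>^2)" by simp
  have "vge v (\<xi>^2 + lam * 1^2) 2" unfolding e by (simp only: vge_neg D)
  then show ?thesis using x0 vge_one vge_1_not by blast
qed

lemma construct:
  assumes two: "vge v 2 1" and l0: "vge v lam 0" and ab: "vge v a 0" "vge v b 0"
    "\<not> (vge v a 1 \<and> vge v b 1)" "vge v (a^2 + lam*b^2) 2"
  shows "\<exists>L'. is_lattice v L' \<and> val_ring v \<times> val_ring v \<subset> L' \<and>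
    (\<forall>z\<in>L'. vge v (fst z^2 + lam * snd z^2) 0)"
proof -
  obtain p where p: "p \<noteq> 0" "v p = 1" using pi_ex by blast
  have ip: "vge v (inverse p) (-1)" using vge_inv[OF p(1)] p by simp
  have notO: "\<not> vge v (x * inverse p) 0" if "vge v x 0" "\<not> vge v x 1" for x
  proof -
    have x: "x \<noteq> 0" "v x = 0" using that by (auto simp: vge_def)
    have "v (x * inverse p) = -1" using vmult[of x "inverse p"] vinv[OF p(1)] x p by simp
    moreover have "x * inverse p \<noteq> 0" using x p by simp
    ultimately show ?thesis by (simp add: vge_def)
  qed
  define w where "w = (a * inverse p, b * inverse p)"
  have wnO: "w \<notin> val_ring v \<times> val_ring v" unfolding w_def mem_Times_iff fst_conv snd_conv mem_O using notO ab by blast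
  have wne: "w \<notin> {(1,0),(0,1)}" using wnO vge_one by (auto simp: mem_O)
  define L' where "L' = span2 (val_ring v) {(1,0),(0,1),w}"
  have mem: "z \<in> L' \<longleftrightarrow> (\<exists>c1\<in>val_ring v. \<exists>c2\<in>val_ring v. \<exists>c3\<in>val_ring v.
      z = (c1 + c3 * fst w, c2 + c3 * snd w))" for z
    unfolding L'_def by (rule span2_three[OF wne])
  have zero: "0 \<in> val_ring v" and one: "1 \<in> val_ring v" using vge_one by (auto simp: mem_O)
  have sub: "val_ring v \<times> val_ring v \<subseteq> L'"
  proof
    fix z assume "z \<in> val_ring v \<times> val_ring v"
    then show "z \<in> L'" unfolding mem using zero by (cases z) force
  qed
  have wL: "w \<in> L'" unfolding mem using zero one by (cases w) force
  have lat: "is_lattice v L'"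
    unfolding is_lattice_def
  proof (intro conjI allI)
    show "\<exists>G. finite G \<and> L' = span2 (val_ring v) G" unfolding L'_def by (intro exI[of _ "{(1,0),(0,1),w}"]) simp
    fix z :: "'a \<times> 'a"
    have "(1,0) \<in> L'" "(0,1) \<in> L'" using sub zero one by blast+
    then have "{(1,0),(0,1)} \<subseteq> L'" by simp
    moreover have "z \<in> span2 UNIV {(1,0),(0,1)}" by (simp add: span2_two)
    ultimately show "\<exists>G. finite G \<and> G \<subseteq> L' \<and> z \<in> span2 UNIV G"
      by (intro exI[of _ "{(1,0),(0,1)}"]) simp
  qed
  have q: "vge v (fst z^2 + lam * snd z^2) 0" if zL': "z \<in> L'" for z
  proof -
    from zL' have "\<exists>c1\<in>val_ring v. \<exists>c2\<in>val_ring v. \<exists>c3\<in>val_ring v.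
      z = (c1 + c3 * fst w, c2 + c3 * snd w)" by (simp only: mem)
    then obtain c1 c2 c3 where c0: "c1 \<in> val_ring v" "c2 \<in> val_ring v" "c3 \<in> val_ring v"
        "z = (c1 + c3 * fst w, c2 + c3 * snd w)" by blast
    have c: "vge v c1 0" "vge v c2 0" "vge v c3 0"
      "z = (c1 + c3 * (a * inverse p), c2 + c3 * (b * inverse p))"
      using c0(1) apply (simp only: mem_O)
      using c0(2) apply (simp only: mem_O)
      using c0(3) apply (simp only: mem_O)
      using c0(4) unfolding w_def fst_conv snd_conv by assumption
    have id: "fst z^2 + lam * snd z^2 = (c1^2 + lam*c2^2) + c3^2 * ((a^2+lam*b^2) * (inverse p)^2)
       + (2 * inverse p) * (c1*c3*a) + (2 * inverse p) * (lam*c2*c3*b)"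
      unfolding c(4) fst_conv snd_conv by (rule id_lemma)
    have t1: "vge v (c1^2 + lam*c2^2) 0" by (rule vge_add[OF vge_pow20[OF c(1)] vge_mult0[OF l0 vge_pow20[OF c(2)]]])
    have "vge v ((a^2+lam*b^2) * (inverse p)^2) (2 + 2*(-1))" using vge_mult[OF ab(4) vge_pow2[OF ip]] .
    then have t2: "vge v (c3^2 * ((a^2+lam*b^2) * (inverse p)^2)) 0" using vge_mult0[OF vge_pow20[OF c(3)]] by simp
    have "vge v (2 * inverse p) (1 + -1)" using vge_mult[OF two ip] .
    then have tp: "vge v (2 * inverse p) 0" by simp
    have t3: "vge v ((2 * inverse p) * (c1*c3*a)) 0" by (rule vge_mult0[OF tp vge_mult0[OF vge_mult0[OF c(1) c(3)] ab(1)]])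
    have t4: "vge v ((2 * inverse p) * (lam*c2*c3*b)) 0" by (rule vge_mult0[OF tp vge_mult0[OF vge_mult0[OF vge_mult0[OF l0 c(2)] c(3)] ab(2)]])
    show ?thesis unfolding id by (rule vge_add[OF vge_add[OF vge_add[OF t1 t2] t3] t4])
  qed
  have "val_ring v \<times> val_ring v \<subset> L'" using sub wL wnO by blast
  then show ?thesis using lat q by blast
qed

end


theorem lemma7p1:
  fixes v :: "'a::field_char_0 \<Rightarrow> int" and lam :: 'a
  assumes "dyadic_local_field v"
    and "lam \<in> val_ring v" and "lam \<noteq> 0" and "v lam \<in> {0, 1}"
  shows "o_maximal v (\<lambda>(x, y). x^2 + lam * y^2) (val_ring v \<times> val_ring v)
     \<longleftrightarrow> quad_defect v (- lam) = val_ideal v"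
proof -
  have dv: "discrete_valuation v" using assms(1) by (simp add: dyadic_local_field_def)
  interpret dval v by (rule dval.intro[OF dv])
  have two: "vge v 2 1" using assms(1) by (simp add: dyadic_local_field_def mem_P)
  have fin: "finite_residue_field v" using assms(1) by (simp add: dyadic_local_field_def)
  have lam0: "vge v lam 0" using assms(2) by (simp add: mem_O)
  define q :: "'a \<times> 'a \<Rightarrow> 'a" where "q = (\<lambda>(x, y). x^2 + lam * y^2)"
  have qz: "q z = fst z^2 + lam * snd z^2" for z by (cases z) (simp add: q_def)
  have qn: "lattice_norm v q L \<subseteq> val_ring v \<longleftrightarrow> (\<forall>z\<in>L. vge v (fst z^2 + lam * snd z^2) 0)" for L
  proof -
    have "q ` L \<subseteq> val_ring v \<longleftrightarrow> (\<forall>z\<in>L. q z \<in> val_ring v)" by blast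
    then show ?thesis by (simp add: norm_sub_iff qz mem_O)
  qed
  define E where "E \<longleftrightarrow> (\<exists>a b. vge v a 0 \<and> vge v b 0 \<and> \<not> (vge v a 1 \<and> vge v b 1) \<and> vge v (a^2 + lam * b^2) 2)"
  define L0 where "L0 = val_ring v \<times> val_ring v"
  have zero: "0 \<in> val_ring v" and one: "1 \<in> val_ring v" using vge_one by (auto simp: mem_O)
  have lat0: "is_lattice v L0"
    unfolding is_lattice_def
  proof (intro conjI allI)
    show "\<exists>G. finite G \<and> L0 = span2 (val_ring v) G" unfolding L0_def
      by (intro exI[of _ "{(1,0),(0,1)}"]) (simp add: span2_two)
    fix z :: "'a \<times> 'a"
    have "(1,0) \<in> L0" "(0,1) \<in> L0" using zero one unfolding L0_def by blast+
    then have "{(1,0),(0,1)} \<subseteq> L0" by simp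
    moreover have "z \<in> span2 UNIV {(1,0),(0,1)}" by (simp add: span2_two)
    ultimately show "\<exists>G. finite G \<and> G \<subseteq> L0 \<and> z \<in> span2 UNIV G"
      by (intro exI[of _ "{(1,0),(0,1)}"]) simp
  qed
  have n0: "lattice_norm v q L0 \<subseteq> val_ring v"
    unfolding qn
  proof
    fix z assume "z \<in> L0"
    then have z: "vge v (fst z) 0" "vge v (snd z) 0" unfolding L0_def by (auto simp: mem_O)
    show "vge v (fst z^2 + lam * snd z^2) 0"
      by (rule vge_add[OF vge_pow20[OF z(1)] vge_mult0[OF lam0 vge_pow20[OF z(2)]]])
  qed
  have big: "(\<exists>L'. is_lattice v L' \<and> L0 \<subset> L' \<and> lattice_norm v q L' \<subseteq> val_ring v) \<longleftrightarrow> E"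
  proof
    assume "\<exists>L'. is_lattice v L' \<and> L0 \<subset> L' \<and> lattice_norm v q L' \<subseteq> val_ring v"
    then obtain L' where L': "is_lattice v L'" "L0 \<subset> L'" "lattice_norm v q L' \<subseteq> val_ring v" by blast
    obtain G where G: "L' = span2 (val_ring v) G" using L'(1) unfolding is_lattice_def by blast
    have Ocl: "\<forall>a\<in>val_ring v. \<forall>b\<in>val_ring v. a * b \<in> val_ring v"
      using vge_mult0 by (auto simp: mem_O)
    have cl: "\<forall>t. vge v t 0 \<longrightarrow> (\<forall>z\<in>L'. smul2 t z \<in> L')"
    proof (intro allI impI ballI)
      fix t z assume tz: "vge v t 0" "z \<in> L'"
      have "t \<in> val_ring v" using tz(1) by (simp add: mem_O)
      then show "smul2 t z \<in> L'" unfolding G using span2_smul[OF Ocl] tz(2) G by blast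
    qed
    have qL: "\<forall>z\<in>L'. vge v (fst z^2 + lam * snd z^2) 0" using L'(3) qn by blast
    obtain w where w: "w \<in> L'" "w \<notin> L0" using L'(2) by blast
    obtain w1 w2 where w12: "w = (w1, w2)" by (cases w)
    have inL: "(w1, w2) \<in> L'" using w w12 by simp
    have nb: "\<not> (vge v w1 0 \<and> vge v w2 0)" using w(2) unfolding w12 L0_def by (simp add: mem_O)
    show E
    proof (cases "w1 \<noteq> 0 \<and> v w1 < 0 \<and> (w2 = 0 \<or> v w1 \<le> v w2)")
      case True
      have h1: "vge v w1 (v w1)" by (rule vge_v)
      have h2: "vge v w2 (v w1)" using True by (auto simp: vge_def)
      have "w1 = w1 \<or> w2 = w1" by simp
      from extract_ab[of w1 w1 w2, OF _ _ h1 h2 this inL cl qL] True show E unfolding E_def by blast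
    next
      case False
      then have F: "w2 \<noteq> 0 \<and> v w2 < 0 \<and> (w1 = 0 \<or> v w2 \<le> v w1)" using nb by (auto simp: vge_def)
      have h1: "vge v w1 (v w2)" using F by (auto simp: vge_def)
      have h2: "vge v w2 (v w2)" by (rule vge_v)
      have "w1 = w2 \<or> w2 = w2" by simp
      from extract_ab[of w2 w1 w2, OF _ _ h1 h2 this inL cl qL] F show E unfolding E_def by blast
    qed
  next
    assume E
    then obtain a b where ab: "vge v a 0" "vge v b 0" "\<not> (vge v a 1 \<and> vge v b 1)" "vge v (a^2 + lam * b^2) 2"
      unfolding E_def by blast
    from construct[OF two lam0 ab] obtain L' where L': "is_lattice v L'" "val_ring v \<times> val_ring v \<subset> L'"
      "\<forall>z\<in>L'. vge v (fst z^2 + lam * snd z^2) 0" by blast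
    then show "\<exists>L'. is_lattice v L' \<and> L0 \<subset> L' \<and> lattice_norm v q L' \<subseteq> val_ring v"
      unfolding L0_def qn by blast
  qed
  have arith: "E \<longleftrightarrow> quad_defect v (-lam) \<noteq> val_ideal v"
  proof (cases "v lam = 1")
    case True
    have nE: "\<not> E" unfolding E_def using case1_noE[OF assms(3) True] by blast
    have "quad_defect v (-lam) = val_ideal v"
    proof (rule qd_eq[of _ 0])
      show "\<forall>\<xi>. \<not> vge v (-lam - \<xi>^2) 2" using case1_allD[OF assms(3) True] by blast
      show "vge v (-lam - 0^2) 1" using vge_v[of lam] True by simp
    qed
    then show ?thesis using nE by simp
  next
    case False
    then have l0: "v lam = 0" using assms(4) by simp
    have EE: "E \<longleftrightarrow> (\<exists>\<xi>. vge v (-lam - \<xi>^2) 2)"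
      unfolding E_def using case0_E[OF assms(3) l0] case0_E_rev[OF lam0] by blast
    show ?thesis
    proof (cases "\<exists>\<xi>. vge v (-lam - \<xi>^2) 2")
      case True
      then show ?thesis using EE qd_ne by blast
    next
      case F2: False
      have "vge v (-lam) 0" using lam0 by simp
      then obtain y where y: "vge v y 0" "vge v (-lam - y^2) 1" using perfect[OF fin two] by blast
      have "quad_defect v (-lam) = val_ideal v" by (rule qd_eq[OF _ y(2)]) (use F2 in blast)
      then show ?thesis using EE F2 by simp
    qed
  qed
  have "o_maximal v q L0 \<longleftrightarrow> quad_defect v (-lam) = val_ideal v"
    unfolding o_maximal_def using lat0 n0 big arith by blast
  then show ?thesis unfolding q_def L0_def .
qed

end
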